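(* Let $\mathcal{D}_0=\{\mathbf{x}^{(0)}_i\}_{i=1}^{n_0}$ and $\mathcal{D}_1=\{\mathbf{x}^{(1)}_j\}_{j=1}^{n_1}$ be finite sets of inputs with $n_0=n_1$, and let $f:\mathbb{R}^d\times\{0,1\}\to[0,1]$ be a model such that for each $s\in\{0,1\}$ there are no ties in $\{f_s(\mathbf{x}):\mathbf{x}\in\mathcal{D}_s\}$, where $f_s(\cdot)=f(\cdot,s)$. Let $\mathbf{T}^f$ be the fair matching function of $f$ computed with the empirical (uniform) distributions on $\mathcal{D}_0$ and $\mathcal{D}_1$. Then for any $s\in\{0,1\}$ and any $\mathbf{x}\in\mathcal{D}_s$, the matched individual is $\mathbf{T}^f(\mathbf{x})=f_{s'}^{-1}\circ F_{s'}^{-1}\circ F_s\circ f_s(\mathbf{x})$, where $s'=1-s$.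
   Context: $F_s$ denotes the (empirical) cumulative distribution function of the values $f_s(\mathbf{x})$, $\mathbf{x}\in\mathcal{D}_s$; $F_{s'}^{-1}$ is its quantile (inverse) function; and $f_{s'}^{-1}$ denotes the inverse of $f_{s'}$ restricted to $\mathcal{D}_{s'}$ (well defined since there are no ties). With $n_0=n_1$, a transport map from the empirical distribution on $\mathcal{D}_s$ to that on $\mathcal{D}_{s'}$ is a bijection $\mathbf{T}:\mathcal{D}_s\to\mathcal{D}_{s'}$. For such $\mathbf{T}_s$, $\Delta\mathrm{MDP}(f,\mathbf{T}_s)=\frac{1}{n_s}\sum_{\mathbf{x}\in\mathcal{D}_s}|f(\mathbf{x},s)-f(\mathbf{T}_s(\mathbf{x}),s')|$. The fair matching function of $f$ is defined as follows: $\mathbf{T}^f_s:=\arg\min_{\mathbf{T}_s}\Delta\mathrm{MDP}(f,\mathbf{T}_s)$ over transport maps from $\mathcal{D}_s$ to $\mathcal{D}_{s'}$, $\hat s:=\arg\min_{s\in\{0,1\}}\Delta\mathrm{MDP}(f,\mathbf{T}^f_s)$, and $\mathbf{T}^f:=\mathbf{T}^f_{\hat s}$. *)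

theory Defs
  imports "HOL-Analysis.Analysis"
begin

text \<open>Groups are indexed by s in {0,1} (type nat); the other group is 1 - s.
  Inputs live in real^'d.  D s is the finite data set of group s,
  and f x s is the model output f(x,s).\<close>

definition ecdf :: "('x \<Rightarrow> nat \<Rightarrow> real) \<Rightarrow> (nat \<Rightarrow> 'x set) \<Rightarrow> nat \<Rightarrow> real \<Rightarrow> real" where
  "ecdf f D s t = real (card {x \<in> D s. f x s \<le> t}) / real (card (D s))"

definition equantile :: "('x \<Rightarrow> nat \<Rightarrow> real) \<Rightarrow> (nat \<Rightarrow> 'x set) \<Rightarrow> nat \<Rightarrow> real \<Rightarrow> real" where
  "equantile f D s p = Inf {t. p \<le> ecdf f D s t}"

text \<open>The candidate map  f_{s'}^{-1} o F_{s'}^{-1} o F_s o f_s, with f_{s'}^{-1} the inverse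
  of f_{s'} restricted to D_{s'}.\<close>
definition rank_match :: "('x \<Rightarrow> nat \<Rightarrow> real) \<Rightarrow> (nat \<Rightarrow> 'x set) \<Rightarrow> nat \<Rightarrow> 'x \<Rightarrow> 'x" where
  "rank_match f D s x =
     the_inv_into (D (1 - s)) (\<lambda>y. f y (1 - s))
       (equantile f D (1 - s) (ecdf f D s (f x s)))"

text \<open>Transport maps between the empirical distributions (n_0 = n_1): bijections D_s -> D_{s'}.\<close>
definition transport_map :: "(nat \<Rightarrow> 'x set) \<Rightarrow> nat \<Rightarrow> ('x \<Rightarrow> 'x) \<Rightarrow> bool" where
  "transport_map D s T \<longleftrightarrow> bij_betw T (D s) (D (1 - s))"

definition DeltaMDP :: "('x \<Rightarrow> nat \<Rightarrow> real) \<Rightarrow> (nat \<Rightarrow> 'x set) \<Rightarrow> nat \<Rightarrow> ('x \<Rightarrow> 'x) \<Rightarrow> real" where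
  "DeltaMDP f D s T = (1 / real (card (D s))) * (\<Sum>x\<in>D s. \<bar>f x s - f (T x) (1 - s)\<bar>)"

definition is_fair_matching_s :: "('x \<Rightarrow> nat \<Rightarrow> real) \<Rightarrow> (nat \<Rightarrow> 'x set) \<Rightarrow> nat \<Rightarrow> ('x \<Rightarrow> 'x) \<Rightarrow> bool" where
  "is_fair_matching_s f D s T \<longleftrightarrow> transport_map D s T \<and>
     (\<forall>T'. transport_map D s T' \<longrightarrow> DeltaMDP f D s T \<le> DeltaMDP f D s T')"

end

theory Submission imports Defs "HOL-Combinatorics.Transposition" begin
lemma monge:
  fixes p q r u :: real
  assumes "p \<le> q" "r \<le> u"
  shows "\<bar>p - r\<bar> + \<bar>q - u\<bar> \<le> \<bar>p - u\<bar> + \<bar>q - r\<bar>"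
  using assms by (auto simp: abs_if)

lemma opt_match:
  fixes g h :: "'a \<Rightarrow> real"
  assumes "finite A" "bij_betw R A B" "bij_betw T A B"
    and "\<forall>x\<in>A. \<forall>x'\<in>A. g x < g x' \<longrightarrow> h (R x) < h (R x')"
    and "inj_on g A"
  shows "(\<Sum>x\<in>A. \<bar>g x - h (R x)\<bar>) \<le> (\<Sum>x\<in>A. \<bar>g x - h (T x)\<bar>)"
  using assms
proof (induction "card A" arbitrary: A B T)
  case 0
  then show ?case by simp
next
  case (Suc n)
  then have "A \<noteq> {}" by auto
  define m where "m = Min (g ` A)"
  have "m \<in> g ` A" unfolding m_def using Suc.prems(1) \<open>A \<noteq> {}\<close> by simp
  then obtain a0 where a0: "a0 \<in> A" "g a0 = m" by auto
  have a0min: "g a0 \<le> g x" if "x \<in> A" for x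
    using a0 that Suc.prems(1) unfolding m_def by simp
  define b0 where "b0 = R a0"
  have b0B: "b0 \<in> B" using Suc.prems(2) a0 b0_def by (auto simp: bij_betw_def)
  have b0min: "h b0 \<le> h b" if bB: "b \<in> B" for b
  proof -
    obtain x where x: "x \<in> A" "b = R x" using Suc.prems(2) bB by (auto simp: bij_betw_def)
    show ?thesis
    proof (cases "x = a0")
      case True then show ?thesis using x b0_def by simp
    next
      case False
      then have "g x \<noteq> g a0" using Suc.prems(5) x a0 by (auto simp: inj_on_def)
      then have "g a0 < g x" using a0min[OF x(1)] by simp
      then show ?thesis using Suc.prems(4) x a0 b0_def by force
    qed
  qed
  define a1 where "a1 = the_inv_into A T b0"
  have a1: "a1 \<in> A" "T a1 = b0"
    using Suc.prems(3) b0B a1_def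
    by (auto simp: bij_betw_def the_inv_into_f_eq the_inv_into_into intro: f_the_inv_into_f)
  define T' where "T' = T \<circ> Transposition.transpose a0 a1"
  have bT': "bij_betw T' A B" unfolding T'_def
    using Suc.prems(3) a0 a1 by (intro bij_betw_trans[of _ A A]) auto
  have T'a0: "T' a0 = b0" using a1 by (simp add: T'_def)
  let ?c = "\<lambda>F x. \<bar>g x - h (F x)\<bar>"
  have le1: "sum (?c T') A \<le> sum (?c T) A"
  proof (cases "a1 = a0")
    case True then show ?thesis by (simp add: T'_def)
  next
    case False
    have fin: "finite (A - {a0, a1})" using Suc.prems(1) by simp
    have eq: "sum F A = F a0 + F a1 + sum F (A - {a0, a1})" for F :: "'a \<Rightarrow> real"
    proof -
      have "A = insert a0 (insert a1 (A - {a0, a1}))" using a0 a1 by auto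
      then have "sum F A = sum F (insert a0 (insert a1 (A - {a0, a1})))" by simp
      also have "\<dots> = F a0 + F a1 + sum F (A - {a0, a1})"
        using fin False by (simp add: add.assoc)
      finally show ?thesis .
    qed
    have rest: "sum (?c T') (A - {a0, a1}) = sum (?c T) (A - {a0, a1})"
      by (rule sum.cong) (auto simp: T'_def)
    have T'a1: "T' a1 = T a0" by (simp add: T'_def)
    have TaB: "T a0 \<in> B" using Suc.prems(3) a0 by (auto simp: bij_betw_def)
    have "?c T' a0 + ?c T' a1 \<le> ?c T a0 + ?c T a1"
      using monge[OF a0min[OF a1(1)] b0min[OF TaB]] T'a0 T'a1 a1 by simp
    then show ?thesis using eq[of "?c T'"] eq[of "?c T"] rest by linarith
  qed
  have A': "card (A - {a0}) = n" using Suc.hyps(2) a0 Suc.prems(1) by simp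
  have bR': "bij_betw R (A - {a0}) (B - {b0})"
    using bij_betw_DiffI[OF Suc.prems(2), of "{a0}" "{b0}"] a0 b0B b0_def by auto
  have bT'': "bij_betw T' (A - {a0}) (B - {b0})"
    using bij_betw_DiffI[OF bT', of "{a0}" "{b0}"] a0 b0B T'a0 by auto
  have IH: "sum (?c R) (A - {a0}) \<le> sum (?c T') (A - {a0})"
    using Suc.hyps(1)[OF A'[symmetric] _ bR' bT''] Suc.prems(1,4,5)
    by (auto intro: inj_on_subset)
  have "sum (?c R) A = ?c R a0 + sum (?c R) (A - {a0})"
    using Suc.prems(1) a0 by (simp add: sum.remove)
  moreover have "sum (?c T') A = ?c T' a0 + sum (?c T') (A - {a0})"
    using Suc.prems(1) a0 by (simp add: sum.remove)
  moreover have "?c R a0 = ?c T' a0" using T'a0 b0_def by simp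
  ultimately show ?case using IH le1 by linarith
qed

definition rk :: "('a \<Rightarrow> real) \<Rightarrow> 'a set \<Rightarrow> 'a \<Rightarrow> nat" where
  "rk g A x = card {x'\<in>A. g x' \<le> g x}"

lemma rk_less:
  assumes "finite A" "x' \<in> A" "g x < g x'"
  shows "rk g A x < rk g A x'"
proof -
  have "x' \<notin> {x'\<in>A. g x' \<le> g x}" using assms by auto
  moreover have "x' \<in> {y\<in>A. g y \<le> g x'}" using assms by auto
  moreover have "{x'\<in>A. g x' \<le> g x} \<subseteq> {y\<in>A. g y \<le> g x'}" using assms by auto
  ultimately have "{x'\<in>A. g x' \<le> g x} \<subset> {y\<in>A. g y \<le> g x'}" by blast
  then show ?thesis unfolding rk_def by (rule psubset_card_mono[rotated]) (use assms in auto)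
qed

lemma rk_le:
  assumes "finite A" "g x \<le> g x'"
  shows "rk g A x \<le> rk g A x'"
  unfolding rk_def
  by (rule card_mono) (use assms in auto)

lemma rk_less_iff:
  assumes "finite A" "x \<in> A" "x' \<in> A"
  shows "rk g A x < rk g A x' \<longleftrightarrow> g x < g x'"
  using rk_less[OF assms(1,3)] rk_le[OF assms(1), of g x' x] by force

lemma rk_bij:
  assumes "finite A" "inj_on g A"
  shows "bij_betw (rk g A) A {1..card A}"
proof -
  have inj: "inj_on (rk g A) A"
  proof (rule inj_onI)
    fix x x' assume xx: "x \<in> A" "x' \<in> A" "rk g A x = rk g A x'"
    show "x = x'"
    proof (rule ccontr)
      assume "x \<noteq> x'"
      then have "g x \<noteq> g x'" using assms(2) xx by (auto simp: inj_on_def)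
      then show False using rk_less[OF assms(1) xx(1), of g x'] rk_less[OF assms(1) xx(2), of g x] xx
        by linarith
    qed
  qed
  have sub: "rk g A ` A \<subseteq> {1..card A}"
  proof
    fix k assume "k \<in> rk g A ` A"
    then obtain x where x: "x \<in> A" "k = rk g A x" by auto
    have "x \<in> {x'\<in>A. g x' \<le> g x}" using x by auto
    then have "card {x'\<in>A. g x' \<le> g x} \<noteq> 0" using assms(1) by auto
    then have "1 \<le> k" unfolding x rk_def by simp
    moreover have "k \<le> card A" unfolding x rk_def using assms(1) by (intro card_mono) auto
    ultimately show "k \<in> {1..card A}" by simp
  qed
  have "rk g A ` A = {1..card A}"
    by (rule card_subset_eq) (use sub card_image[OF inj] in auto)
  then show ?thesis using inj by (simp add: bij_betw_def)
qed

lemma equantile_rk: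
  assumes fin: "finite (D s)" and y0: "y0 \<in> D s"
  shows "equantile f D s (real (rk (\<lambda>y. f y s) (D s) y0) / real (card (D s))) = f y0 s"
proof -
  let ?h = "\<lambda>y. f y s"
  let ?k = "rk ?h (D s) y0"
  have npos: "real (card (D s)) > 0" using fin y0 by (auto simp: card_gt_0_iff)
  have "{t. real ?k / real (card (D s)) \<le> ecdf f D s t} = {f y0 s..}"
  proof (intro set_eqI iffI)
    fix t assume "t \<in> {t. real ?k / real (card (D s)) \<le> ecdf f D s t}"
    then have le: "real ?k / real (card (D s)) \<le> real (card {x \<in> D s. f x s \<le> t}) / real (card (D s))"
      by (simp add: ecdf_def)
    show "t \<in> {f y0 s..}"
    proof (rule ccontr)
      assume "t \<notin> {f y0 s..}"
      then have tl: "t < f y0 s" by simp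
      have "{x \<in> D s. f x s \<le> t} \<subseteq> {x \<in> D s. f x s \<le> f y0 s}" using tl by auto
      moreover have "y0 \<notin> {x \<in> D s. f x s \<le> t}" using tl by auto
      moreover have "y0 \<in> {x \<in> D s. f x s \<le> f y0 s}" using y0 by auto
      ultimately have "{x \<in> D s. f x s \<le> t} \<subset> {x \<in> D s. f x s \<le> f y0 s}" by blast
      then have "card {x \<in> D s. f x s \<le> t} < ?k" unfolding rk_def
        by (rule psubset_card_mono[rotated]) (use fin in auto)
      then have "real (card {x \<in> D s. f x s \<le> t}) / real (card (D s)) < real ?k / real (card (D s))"
        using npos by (simp add: divide_strict_right_mono)
      then show False using le by linarith
    qed
  next
    fix t assume "t \<in> {f y0 s..}"
    then have "?k \<le> card {x \<in> D s. f x s \<le> t}" unfolding rk_def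
      by (intro card_mono) (use fin in auto)
    then show "t \<in> {t. real ?k / real (card (D s)) \<le> ecdf f D s t}"
      using npos by (simp add: ecdf_def divide_right_mono)
  qed
  then show ?thesis by (simp add: equantile_def)
qed

theorem mainTheorem4:
  fixes D :: "nat \<Rightarrow> (real ^ 'd) set"
    and f :: "real ^ 'd \<Rightarrow> nat \<Rightarrow> real"
  assumes fin0: "finite (D 0)" and fin1: "finite (D 1)"
    and eqsize: "card (D 0) = card (D 1)"
    and range01: "\<And>x s. s \<in> {0, 1} \<Longrightarrow> f x s \<in> {0..1}"
    and noties: "\<And>s. s \<in> {0, 1} \<Longrightarrow> inj_on (\<lambda>x. f x s) (D s)"
  shows "\<forall>s \<in> {0, 1}. is_fair_matching_s f D s (rank_match f D s)"
proof
  fix s :: nat assume s: "s \<in> {0, 1}"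
  define s' where "s' = 1 - s"
  have s': "s' \<in> {0, 1}" using s s'_def by auto
  define A where "A = D s"
  define B where "B = D s'"
  define g where "g = (\<lambda>x. f x s)"
  define h where "h = (\<lambda>y. f y s')"
  have finA: "finite A" using s fin0 fin1 A_def by auto
  have finB: "finite B" using s' fin0 fin1 B_def by auto
  have cardAB: "card A = card B" using s eqsize A_def B_def s'_def by auto
  have injg: "inj_on g A" using noties[OF s] A_def g_def by simp
  have injh: "inj_on h B" using noties[OF s'] B_def h_def by simp
  have bA: "bij_betw (rk g A) A {1..card A}" by (rule rk_bij[OF finA injg])
  have bB: "bij_betw (rk h B) B {1..card A}" using rk_bij[OF finB injh] cardAB by simp
  define \<phi> where "\<phi> = the_inv_into B (rk h B) \<circ> rk g A"
  have bphi: "bij_betw \<phi> A B" unfolding \<phi>_def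
    by (rule bij_betw_trans[OF bA bij_betw_the_inv_into[OF bB]])
  have phiB: "\<phi> x \<in> B" if "x \<in> A" for x using bphi that by (auto simp: bij_betw_def)
  have rkphi: "rk h B (\<phi> x) = rk g A x" if "x \<in> A" for x
    unfolding \<phi>_def using bA bB that
    by (auto intro!: f_the_inv_into_f_bij_betw simp: bij_betw_def)
  have agree: "rank_match f D s x = \<phi> x" if x: "x \<in> A" for x
  proof -
    have "ecdf f D s (f x s) = real (rk g A x) / real (card A)"
      by (simp add: ecdf_def rk_def A_def g_def)
    also have "\<dots> = real (rk h B (\<phi> x)) / real (card B)" using rkphi[OF x] cardAB by simp
    finally have e: "ecdf f D s (f x s) = real (rk h B (\<phi> x)) / real (card B)" .
    have "equantile f D s' (ecdf f D s (f x s)) = h (\<phi> x)"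
      unfolding e B_def h_def
      by (rule equantile_rk) (use finB phiB[OF x] B_def in auto)
    then have "rank_match f D s x = the_inv_into B h (h (\<phi> x))"
      by (simp add: rank_match_def s'_def B_def h_def)
    also have "\<dots> = \<phi> x" using injh phiB[OF x] by (simp add: the_inv_into_f_f)
    finally show ?thesis .
  qed
  have bR: "bij_betw (rank_match f D s) A B"
    using bij_betw_cong[of A "rank_match f D s" \<phi> B] bphi agree by blast
  have mono: "\<forall>x\<in>A. \<forall>x'\<in>A. g x < g x' \<longrightarrow> h (rank_match f D s x) < h (rank_match f D s x')"
  proof (intro ballI impI)
    fix x x' assume xx: "x \<in> A" "x' \<in> A" "g x < g x'"
    have "rk g A x < rk g A x'" using rk_less[OF finA xx(2,3)] .
    then have "rk h B (\<phi> x) < rk h B (\<phi> x')" using rkphi xx by simp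
    then have "h (\<phi> x) < h (\<phi> x')" using rk_less_iff[OF finB phiB phiB] xx by blast
    then show "h (rank_match f D s x) < h (rank_match f D s x')" using agree xx by simp
  qed
  show "is_fair_matching_s f D s (rank_match f D s)"
    unfolding is_fair_matching_s_def
  proof (intro conjI allI impI)
    show "transport_map D s (rank_match f D s)"
      using bR by (simp add: transport_map_def A_def B_def s'_def)
    fix T' assume "transport_map D s T'"
    then have bT: "bij_betw T' A B" by (simp add: transport_map_def A_def B_def s'_def)
    have "(\<Sum>x\<in>A. \<bar>g x - h (rank_match f D s x)\<bar>) \<le> (\<Sum>x\<in>A. \<bar>g x - h (T' x)\<bar>)"
      by (rule opt_match[OF finA bR bT mono injg])
    then show "DeltaMDP f D s (rank_match f D s) \<le> DeltaMDP f D s T'"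
      unfolding DeltaMDP_def
      by (intro mult_left_mono) (simp_all add: A_def g_def h_def s'_def)
  qed
qed

end
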